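(* Let $P$ be a profile of linear orders on a finite set $A$ which is single-crossing with respect to some tree on its voter set. Then every subprofile of $P$ is single-crossing with respect to some tree on its own voter set if and only if $P$ is single-crossing with respect to a line (a path graph on the voter set).
   Context: A profile assigns a linear order on $A$ to each voter in a finite voter set; a subprofile is the restriction of the profile to a nonempty subset of voters. Voter $i$ prefers $a$ to $b$ is written $a\succ_i b$. Given a tree $T=(V,E)$ on the voter set, the profile is single-crossing with respect to $T$ if for every pair of distinct alternatives $a,b$ one of the following holds: (i) there is an edge $e\in E$ such that, removing $e$ from $T$, the two resulting subtrees have vertex sets $V_1,V_2$ with all voters in $V_1$ preferring $a$ to $b$ and all voters in $V_2$ preferring $b$ to $a$; or (ii) all voters prefer $a$ to $b$, or all voters prefer $b$ to $a$. *)

theory Defs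
  imports Main
begin

(* A profile on voter set V over alternatives A: P i a b means "a \<succ>_i b".
   Each voter's preference is a (strict) linear order on A. *)
definition is_profile :: "'v set \<Rightarrow> 'a set \<Rightarrow> ('v \<Rightarrow> 'a \<Rightarrow> 'a \<Rightarrow> bool) \<Rightarrow> bool" where
  "is_profile V A P \<longleftrightarrow>
     (\<forall>i\<in>V. (\<forall>a\<in>A. \<not> P i a a)
           \<and> (\<forall>a\<in>A. \<forall>b\<in>A. \<forall>c\<in>A. P i a b \<longrightarrow> P i b c \<longrightarrow> P i a c)
           \<and> (\<forall>a\<in>A. \<forall>b\<in>A. a \<noteq> b \<longrightarrow> P i a b \<or> P i b a))"

definition adj :: "'v set set \<Rightarrow> ('v \<times> 'v) set" where
  "adj E = {(u, w). {u, w} \<in> E}"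

definition graph_on :: "'v set \<Rightarrow> 'v set set \<Rightarrow> bool" where
  "graph_on V E \<longleftrightarrow> (\<forall>e\<in>E. e \<subseteq> V \<and> card e = 2)"

definition connected_graph :: "'v set \<Rightarrow> 'v set set \<Rightarrow> bool" where
  "connected_graph V E \<longleftrightarrow> (\<forall>u\<in>V. \<forall>w\<in>V. (u, w) \<in> (adj E)\<^sup>*)"

definition is_tree :: "'v set \<Rightarrow> 'v set set \<Rightarrow> bool" where
  "is_tree V E \<longleftrightarrow> graph_on V E \<and> connected_graph V E
     \<and> (\<forall>u w. {u, w} \<in> E \<longrightarrow> (u, w) \<notin> (adj (E - {{u, w}}))\<^sup>*)"

definition is_line :: "'v set \<Rightarrow> 'v set set \<Rightarrow> bool" where
  "is_line V E \<longleftrightarrow> (\<exists>f n. bij_betw f {..<n} V \<and> E = {{f j, f (Suc j)} | j. Suc j < n})"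

definition side :: "'v set set \<Rightarrow> 'v set \<Rightarrow> 'v \<Rightarrow> 'v set" where
  "side E e u = {x. (u, x) \<in> (adj (E - {e}))\<^sup>*}"

definition single_crossing_wrt :: "'v set \<Rightarrow> 'a set \<Rightarrow> ('v \<Rightarrow> 'a \<Rightarrow> 'a \<Rightarrow> bool) \<Rightarrow> 'v set set \<Rightarrow> bool" where
  "single_crossing_wrt V A P E \<longleftrightarrow>
     (\<forall>a\<in>A. \<forall>b\<in>A. a \<noteq> b \<longrightarrow>
        (\<exists>u w. {u, w} \<in> E
            \<and> (\<forall>i\<in>side E {u, w} u. P i a b)
            \<and> (\<forall>i\<in>side E {u, w} w. P i b a))
        \<or> (\<forall>i\<in>V. P i a b) \<or> (\<forall>i\<in>V. P i b a))"

definition single_crossing_tree :: "'v set \<Rightarrow> 'a set \<Rightarrow> ('v \<Rightarrow> 'a \<Rightarrow> 'a \<Rightarrow> bool) \<Rightarrow> bool" where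
  "single_crossing_tree V A P \<longleftrightarrow> (\<exists>E. is_tree V E \<and> single_crossing_wrt V A P E)"

definition single_crossing_line :: "'v set \<Rightarrow> 'a set \<Rightarrow> ('v \<Rightarrow> 'a \<Rightarrow> 'a \<Rightarrow> bool) \<Rightarrow> bool" where
  "single_crossing_line V A P \<longleftrightarrow> (\<exists>E. is_line V E \<and> single_crossing_wrt V A P E)"

end

theory Submission
  imports Defs
begin

lemma adj_iff: "(x,y) \<in> adj X \<longleftrightarrow> {x,y} \<in> X"
  by (simp add: adj_def)

lemma adj_sym: "(x,y) \<in> adj X \<Longrightarrow> (y,x) \<in> adj X"
  by (simp add: adj_def insert_commute)

lemma rtr_sym: "(x,y) \<in> (adj X)\<^sup>* \<Longrightarrow> (y,x) \<in> (adj X)\<^sup>*"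
proof (induction rule: rtrancl_induct)
  case base then show ?case by simp
next
  case (step y z)
  have "(z,y) \<in> adj X" using adj_sym[OF step(2)] .
  then show ?case using step(3) by (rule converse_rtrancl_into_rtrancl)
qed

lemma rtr_mono: "X \<subseteq> Y \<Longrightarrow> (x,y) \<in> (adj X)\<^sup>* \<Longrightarrow> (x,y) \<in> (adj Y)\<^sup>*"
proof -
  assume "X \<subseteq> Y"
  then have "adj X \<subseteq> adj Y" by (auto simp: adj_def)
  then show "(x,y) \<in> (adj X)\<^sup>* \<Longrightarrow> (x,y) \<in> (adj Y)\<^sup>*" using rtrancl_mono by blast
qed

lemma edge_in: "graph_on U E \<Longrightarrow> {u,w} \<in> E \<Longrightarrow> u \<in> U \<and> w \<in> U \<and> u \<noteq> w"
proof -
  assume g: "graph_on U E" and e: "{u,w} \<in> E"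
  then have "{u,w} \<subseteq> U" "card {u,w} = 2" unfolding graph_on_def by auto
  then show ?thesis by (cases "u = w") auto
qed

lemma reach_in:
  assumes g: "graph_on U E" and X: "X \<subseteq> E" and r: "(x,y) \<in> (adj X)\<^sup>*" and x: "x \<in> U"
  shows "y \<in> U"
  using r
proof (induction rule: rtrancl_induct)
  case base then show ?case using x by simp
next
  case (step y z)
  then have yz: "{y,z} \<in> E" using X by (auto simp: adj_def)
  show ?case using edge_in[OF g yz] by simp
qed

lemma side_self: "u \<in> side E e u" by (simp add: side_def)

lemma side_sub: "graph_on U E \<Longrightarrow> u \<in> U \<Longrightarrow> side E e u \<subseteq> U"
  unfolding side_def using reach_in[of U E "E - {e}"] by blast

lemma side_partition:
  assumes "connected_graph U E" "{u,w} \<in> E" "u \<in> U" "y \<in> U"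
  shows "y \<in> side E {u,w} u \<or> y \<in> side E {u,w} w"
proof -
  have "(u,y) \<in> (adj E)\<^sup>*" using assms unfolding connected_graph_def by blast
  then show ?thesis
  proof (induction rule: rtrancl_induct)
    case base then show ?case by (simp add: side_self)
  next
    case (step y z)
    show ?case
    proof (cases "{y,z} = {u,w}")
      case True
      then have "z = u \<or> z = w" by (metis doubleton_eq_iff)
      then show ?thesis using side_self[of u E "{u,w}"] side_self[of w E "{u,w}"] by blast
    next
      case False
      then have "(y,z) \<in> adj (E - {{u,w}})" using step by (auto simp: adj_def)
      then have "\<And>r. y \<in> side E {u,w} r \<Longrightarrow> z \<in> side E {u,w} r"
        unfolding side_def by (simp add: rtrancl.rtrancl_into_rtrancl)
      then show ?thesis using step(3) by blast
    qed
  qed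
qed

lemma side_disj:
  assumes "is_tree U E" "{u,w} \<in> E" "y \<in> side E {u,w} u" "y \<in> side E {u,w} w"
  shows False
proof -
  have "(u,y) \<in> (adj (E - {{u,w}}))\<^sup>*" "(w,y) \<in> (adj (E - {{u,w}}))\<^sup>*" using assms by (auto simp: side_def)
  then have "(u,w) \<in> (adj (E - {{u,w}}))\<^sup>*" using rtr_sym[of w y] rtrancl_trans[of u y _ w] by blast
  then show False using assms unfolding is_tree_def by blast
qed

lemma asym: "is_profile U A P \<Longrightarrow> i \<in> U \<Longrightarrow> a \<in> A \<Longrightarrow> b \<in> A \<Longrightarrow> P i a b \<Longrightarrow> P i b a \<Longrightarrow> False"
  unfolding is_profile_def by blast

lemma tot: "is_profile U A P \<Longrightarrow> i \<in> U \<Longrightarrow> a \<in> A \<Longrightarrow> b \<in> A \<Longrightarrow> a \<noteq> b \<Longrightarrow> \<not> P i a b \<Longrightarrow> P i b a"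
  unfolding is_profile_def by blast

lemma irr: "is_profile U A P \<Longrightarrow> i \<in> U \<Longrightarrow> a \<in> A \<Longrightarrow> P i a a \<Longrightarrow> False"
  unfolding is_profile_def by blast

lemma prof_sub: "is_profile V A P \<Longrightarrow> U \<subseteq> V \<Longrightarrow> is_profile U A P"
  unfolding is_profile_def by blast

lemma sc_edge:
  assumes T: "is_tree U E" and SC: "single_crossing_wrt U A P E" and PR: "is_profile U A P"
    and a: "a \<in> A" and b: "b \<in> A" and ab: "a \<noteq> b"
    and n1: "\<not>(\<forall>i\<in>U. P i a b)" and n2: "\<not>(\<forall>i\<in>U. P i b a)"
  obtains u w where "{u,w} \<in> E" "\<forall>i\<in>U. i \<in> side E {u,w} u \<longleftrightarrow> P i a b"
    "\<forall>i\<in>U. i \<in> side E {u,w} w \<longleftrightarrow> P i b a"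
proof -
  obtain u w where e: "{u,w} \<in> E" and Su: "\<forall>i\<in>side E {u,w} u. P i a b"
    and Sw: "\<forall>i\<in>side E {u,w} w. P i b a"
    using SC a b ab n1 n2 unfolding single_crossing_wrt_def by blast
  have g: "graph_on U E" and c: "connected_graph U E" using T unfolding is_tree_def by auto
  have uU: "u \<in> U" using edge_in[OF g e] by auto
  have "\<forall>i\<in>U. i \<in> side E {u,w} u \<longleftrightarrow> P i a b"
  proof
    fix i assume i: "i \<in> U"
    show "i \<in> side E {u,w} u \<longleftrightarrow> P i a b"
      using side_partition[OF c e uU i] Su Sw asym[OF PR i a b] by blast
  qed
  moreover have "\<forall>i\<in>U. i \<in> side E {u,w} w \<longleftrightarrow> P i b a"
  proof
    fix i assume i: "i \<in> U"
    show "i \<in> side E {u,w} w \<longleftrightarrow> P i b a"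
      using side_partition[OF c e uU i] Su Sw asym[OF PR i a b] by blast
  qed
  ultimately show ?thesis using that e by blast
qed

lemma leaf:
  assumes T: "is_tree U E" and SC: "single_crossing_wrt U A P E" and PR: "is_profile U A P"
    and a: "a \<in> A" and b: "b \<in> A" and y: "y \<in> U" and yba: "P y b a"
    and oth: "\<forall>i\<in>U-{y}. P i a b" and x: "x \<in> U" "x \<noteq> y"
  shows "\<exists>u. {u,y} \<in> E \<and> side E {u,y} u = U - {y} \<and> side E {u,y} y = {y}
              \<and> (\<forall>e\<in>E. y \<in> e \<longrightarrow> e = {u,y})"
proof -
  have ab: "a \<noteq> b" using irr[OF PR y a] yba by blast
  have xab: "P x a b" using oth x by blast
  have n1: "\<not>(\<forall>i\<in>U. P i a b)" using asym[OF PR y a b] yba y by blast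
  have n2: "\<not>(\<forall>i\<in>U. P i b a)" using asym[OF PR _ a b] xab x by blast
  obtain u w where e: "{u,w} \<in> E" and Su: "\<forall>i\<in>U. i \<in> side E {u,w} u \<longleftrightarrow> P i a b"
    and Sw: "\<forall>i\<in>U. i \<in> side E {u,w} w \<longleftrightarrow> P i b a"
    using sc_edge[OF T SC PR a b ab n1 n2] by blast
  have g: "graph_on U E" using T unfolding is_tree_def by auto
  have uU: "u \<in> U" and wU: "w \<in> U" using edge_in[OF g e] by auto
  have sw: "side E {u,w} w = {y}"
  proof
    show "side E {u,w} w \<subseteq> {y}"
    proof
      fix i assume i: "i \<in> side E {u,w} w"
      then have iU: "i \<in> U" using side_sub[OF g wU] by blast
      show "i \<in> {y}"
      proof (rule ccontr)
        assume "i \<notin> {y}"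
        then have "P i a b" using oth iU by blast
        moreover have "P i b a" using Sw iU i by blast
        ultimately show False using asym[OF PR iU a b] by blast
      qed
    qed
    show "{y} \<subseteq> side E {u,w} w" using Sw y yba by blast
  qed
  have wy: "w = y" using side_self[of w E "{u,w}"] sw by blast
  have su: "side E {u,w} u = U - {y}"
  proof
    show "side E {u,w} u \<subseteq> U - {y}"
      using side_sub[OF g uU] side_disj[OF T e] sw by blast
    show "U - {y} \<subseteq> side E {u,w} u" using Su oth by blast
  qed
  have only: "\<forall>e\<in>E. y \<in> e \<longrightarrow> e = {u,y}"
  proof (intro ballI impI)
    fix e assume eE: "e \<in> E" and ye: "y \<in> e"
    show "e = {u,y}"
    proof (rule ccontr)
      assume ne: "e \<noteq> {u,y}"
      have "card e = 2" using g eE unfolding graph_on_def by blast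
      then obtain s1 t1 where st: "e = {s1,t1}" "s1 \<noteq> t1" by (auto simp: card_2_iff)
      obtain t where et: "e = {y,t}" and ty: "t \<noteq> y"
      proof (cases "y = s1")
        case True then show ?thesis using that st by blast
      next
        case False then have "y = t1" using ye st by blast
        then show ?thesis using that[of s1] st by (auto simp: insert_commute)
      qed
      have "(y,t) \<in> adj (E - {{u,y}})" using eE ne et by (simp add: adj_def)
      then have "t \<in> side E {u,y} y" unfolding side_def by auto
      then show False using sw wy ty by simp
    qed
  qed
  show ?thesis using e su sw only wy by blast
qed

definition PB :: "'a set \<Rightarrow> ('v \<Rightarrow> 'a \<Rightarrow> 'a \<Rightarrow> bool) \<Rightarrow> 'v \<Rightarrow> 'v \<Rightarrow> 'v \<Rightarrow> bool" where
  "PB A P x y z \<longleftrightarrow> (\<forall>a\<in>A. \<forall>b\<in>A. P x a b \<and> P z a b \<longrightarrow> P y a b)"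

lemma tree3:
  assumes T: "is_tree U E" and SC: "single_crossing_wrt U A P E" and PR: "is_profile U A P"
    and U: "U = {x,y,z}" and d: "x \<noteq> y" "y \<noteq> z" "x \<noteq> z"
  shows "PB A P x y z \<or> PB A P y x z \<or> PB A P x z y"
proof (rule ccontr)
  assume "\<not> ?thesis"
  then obtain a1 b1 a2 b2 a3 b3 where
    A1: "a1 \<in> A" "b1 \<in> A" "P x a1 b1" "P z a1 b1" "\<not> P y a1 b1" and
    A2: "a2 \<in> A" "b2 \<in> A" "P y a2 b2" "P z a2 b2" "\<not> P x a2 b2" and
    A3: "a3 \<in> A" "b3 \<in> A" "P x a3 b3" "P y a3 b3" "\<not> P z a3 b3"
    unfolding PB_def by blast
  have xU: "x \<in> U" and yU: "y \<in> U" and zU: "z \<in> U" using U by auto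
  have ne1: "a1 \<noteq> b1" using A1 irr[OF PR xU] by blast
  have ne2: "a2 \<noteq> b2" using A2 irr[OF PR yU] by blast
  have ne3: "a3 \<noteq> b3" using A3 irr[OF PR xU] by blast
  have L1: "\<exists>u. {u,y} \<in> E \<and> side E {u,y} u = U - {y} \<and> side E {u,y} y = {y}
              \<and> (\<forall>e\<in>E. y \<in> e \<longrightarrow> e = {u,y})"
    using leaf[OF T SC PR A1(1,2) yU tot[OF PR yU A1(1,2) ne1 A1(5)] _ xU d(1)] A1 U by auto
  have L2: "\<exists>u. {u,x} \<in> E \<and> side E {u,x} u = U - {x} \<and> side E {u,x} x = {x}
              \<and> (\<forall>e\<in>E. x \<in> e \<longrightarrow> e = {u,x})"
    using leaf[OF T SC PR A2(1,2) xU tot[OF PR xU A2(1,2) ne2 A2(5)] _ yU] A2 U d by auto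
  have L3: "\<exists>u. {u,z} \<in> E \<and> side E {u,z} u = U - {z} \<and> side E {u,z} z = {z}
              \<and> (\<forall>e\<in>E. z \<in> e \<longrightarrow> e = {u,z})"
    using leaf[OF T SC PR A3(1,2) zU tot[OF PR zU A3(1,2) ne3 A3(5)] _ xU] A3 U d by auto
  obtain u1 where u1: "{u1,y} \<in> E" "side E {u1,y} u1 = U - {y}" by (rule exE[OF L1]) blast
  obtain u2 where u2: "side E {u2,x} x = {x}" "\<forall>e\<in>E. x \<in> e \<longrightarrow> e = {u2,x}" by (rule exE[OF L2]) blast
  obtain u3 where u3: "side E {u3,z} z = {z}" "\<forall>e\<in>E. z \<in> e \<longrightarrow> e = {u3,z}" by (rule exE[OF L3]) blast
  have "u1 \<in> U - {y}" using u1(2) side_self[of u1 E "{u1,y}"] by simp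
  then have "u1 = x \<or> u1 = z" using U by auto
  then show False
  proof
    assume h: "u1 = x"
    have eq: "{u1,y} = {u2,x}" using bspec[OF u2(2) u1(1)] h by simp
    have "side E {u1,y} x = {x}" by (subst eq) (rule u2(1))
    then have "{x} = U - {y}" using u1(2) h by simp
    moreover have "z \<in> U - {y}" using U d by auto
    ultimately have "z \<in> {x}" by (simp only:)
    then show False using d by simp
  next
    assume h: "u1 = z"
    have eq: "{u1,y} = {u3,z}" using bspec[OF u3(2) u1(1)] h by simp
    have "side E {u1,y} z = {z}" by (subst eq) (rule u3(1))
    then have "{z} = U - {y}" using u1(2) h by simp
    moreover have "x \<in> U - {y}" using U d by auto
    ultimately have "x \<in> {z}" by (simp only:)
    then show False using d by simp
  qed
qed

lemma nest:
  assumes T: "is_tree U E" and e: "{u,w} \<in> E" and e': "{s,t} \<in> E" and ne: "{u,w} \<noteq> {s,t}"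
    and ut: "u \<in> side E {s,t} t" and wt: "w \<in> side E {s,t} t"
    and sz: "s \<in> side E {u,w} z"
  shows "side E {s,t} s \<subseteq> side E {u,w} z"
proof
  fix x assume "x \<in> side E {s,t} s"
  then have r: "(s,x) \<in> (adj (E - {{s,t}}))\<^sup>*" by (simp add: side_def)
  have "(s,x) \<in> (adj (E - {{s,t}} - {{u,w}}))\<^sup>*"
    using r
  proof (induction rule: rtrancl_induct)
    case base then show ?case by simp
  next
    case (step y x)
    show ?case
    proof (cases "{y,x} = {u,w}")
      case True
      then have "y \<in> {u,w}" by auto
      then have ty: "(t,y) \<in> (adj (E - {{s,t}}))\<^sup>*" using ut wt by (auto simp: side_def)
      have "(s,y) \<in> (adj (E - {{s,t}}))\<^sup>*" using rtr_mono[OF _ step(3)] by blast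
      then have "(s,t) \<in> (adj (E - {{s,t}}))\<^sup>*" using rtr_sym[OF ty] by (rule rtrancl_trans)
      then show ?thesis using T e' unfolding is_tree_def by blast
    next
      case False
      then have "(y,x) \<in> adj (E - {{s,t}} - {{u,w}})" using step(2) by (simp add: adj_def)
      with step(3) show ?thesis by (rule rtrancl.rtrancl_into_rtrancl)
    qed
  qed
  then have "(s,x) \<in> (adj (E - {{u,w}}))\<^sup>*" using rtr_mono[of "E - {{s,t}} - {{u,w}}" "E - {{u,w}}"] by blast
  moreover have "(z,s) \<in> (adj (E - {{u,w}}))\<^sup>*" using sz by (simp add: side_def)
  ultimately have "(z,x) \<in> (adj (E - {{u,w}}))\<^sup>*" by (rule rtrancl_trans[rotated])
  then show "x \<in> side E {u,w} z" by (simp add: side_def)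
qed

lemma compat:
  assumes T: "is_tree U E" and e: "{u,w} \<in> E" and e': "{u',w'} \<in> E"
  shows "side E {u,w} u \<inter> side E {u',w'} u' = {} \<or> side E {u,w} u \<inter> side E {u',w'} w' = {}
       \<or> side E {u,w} w \<inter> side E {u',w'} u' = {} \<or> side E {u,w} w \<inter> side E {u',w'} w' = {}"
proof (cases "{u,w} = {u',w'}")
  case True
  then have "(u' = u \<and> w' = w) \<or> (u' = w \<and> w' = u)" by (metis doubleton_eq_iff)
  then show ?thesis
  proof
    assume "u' = u \<and> w' = w"
    then show ?thesis using side_disj[OF T e] by blast
  next
    assume h: "u' = w \<and> w' = u"
    then have "{u',w'} = {u,w}" by (simp add: insert_commute)
    then show ?thesis using side_disj[OF T e] h by auto
  qed
next
  case False
  have g: "graph_on U E" and c: "connected_graph U E" using T unfolding is_tree_def by auto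
  have uU: "u \<in> U" using edge_in[OF g e] by auto
  have u'U: "u' \<in> U" and w'U: "w' \<in> U" using edge_in[OF g e'] by auto
  have uw: "(u,w) \<in> adj (E - {{u',w'}})" using e False by (simp add: adj_def)
  have same: "w \<in> side E {u',w'} r" if "u \<in> side E {u',w'} r" for r
  proof -
    have "(r,u) \<in> (adj (E - {{u',w'}}))\<^sup>*" using that by (simp add: side_def)
    then have "(r,w) \<in> (adj (E - {{u',w'}}))\<^sup>*" using uw by (rule rtrancl.rtrancl_into_rtrancl)
    then show ?thesis by (simp add: side_def)
  qed
  from side_partition[OF c e' u'U uU] show ?thesis
  proof
    assume uu': "u \<in> side E {u',w'} u'"
    then have wu': "w \<in> side E {u',w'} u'" using same by blast
    have F2: "{u,w} \<noteq> {w',u'}" using False by (simp add: insert_commute)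
    have e2: "{w',u'} \<in> E" using e' by (simp add: insert_commute)
    have sw: "side E {w',u'} = side E {u',w'}" by (simp add: insert_commute)
    from side_partition[OF c e uU w'U] show ?thesis
    proof
      assume "w' \<in> side E {u,w} u"
      then have "side E {w',u'} w' \<subseteq> side E {u,w} u" using nest[OF T e e2 F2] uu' wu' sw by simp
      then have "side E {u',w'} w' \<subseteq> side E {u,w} u" using sw by simp
      then have "side E {u,w} w \<inter> side E {u',w'} w' = {}" using side_disj[OF T e] by blast
      then show ?thesis by blast
    next
      assume "w' \<in> side E {u,w} w"
      then have "side E {w',u'} w' \<subseteq> side E {u,w} w" using nest[OF T e e2 F2] uu' wu' sw by simp
      then have "side E {u',w'} w' \<subseteq> side E {u,w} w" using sw by simp
      then have "side E {u,w} u \<inter> side E {u',w'} w' = {}" using side_disj[OF T e] by blast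
      then show ?thesis by blast
    qed
  next
    assume uw': "u \<in> side E {u',w'} w'"
    then have ww': "w \<in> side E {u',w'} w'" using same by blast
    from side_partition[OF c e uU u'U] show ?thesis
    proof
      assume "u' \<in> side E {u,w} u"
      then have "side E {u',w'} u' \<subseteq> side E {u,w} u" using nest[OF T e e' False] uw' ww' by simp
      then have "side E {u,w} w \<inter> side E {u',w'} u' = {}" using side_disj[OF T e] by blast
      then show ?thesis by blast
    next
      assume "u' \<in> side E {u,w} w"
      then have "side E {u',w'} u' \<subseteq> side E {u,w} w" using nest[OF T e e' False] uw' ww' by simp
      then have "side E {u,w} u \<inter> side E {u',w'} u' = {}" using side_disj[OF T e] by blast
      then show ?thesis by blast
    qed
  qed
qed

lemma tree_hc:
  assumes T: "is_tree U E" and SC: "single_crossing_wrt U A P E" and PR: "is_profile U A P"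
    and A: "a \<in> A" "b \<in> A" "c \<in> A" "d \<in> A"
    and X: "x1 \<in> U" "x2 \<in> U" "x3 \<in> U" "x4 \<in> U"
    and H: "P x1 a b" "P x2 a b" "P x3 b a" "P x4 b a" "P x1 c d" "P x3 c d" "P x2 d c" "P x4 d c"
  shows False
proof -
  have ab: "a \<noteq> b" using irr[OF PR X(1) A(1)] H by blast
  have cd: "c \<noteq> d" using irr[OF PR X(1) A(3)] H by blast
  have n1: "\<not>(\<forall>i\<in>U. P i a b)" using asym[OF PR X(3) A(1,2)] H X by blast
  have n2: "\<not>(\<forall>i\<in>U. P i b a)" using asym[OF PR X(1) A(1,2)] H X by blast
  have n3: "\<not>(\<forall>i\<in>U. P i c d)" using asym[OF PR X(2) A(3,4)] H X by blast
  have n4: "\<not>(\<forall>i\<in>U. P i d c)" using asym[OF PR X(1) A(3,4)] H X by blast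
  obtain u w where e: "{u,w} \<in> E" and Su: "\<forall>i\<in>U. i \<in> side E {u,w} u \<longleftrightarrow> P i a b"
    and Sw: "\<forall>i\<in>U. i \<in> side E {u,w} w \<longleftrightarrow> P i b a"
    using sc_edge[OF T SC PR A(1,2) ab n1 n2] by blast
  obtain u' w' where e': "{u',w'} \<in> E" and Su': "\<forall>i\<in>U. i \<in> side E {u',w'} u' \<longleftrightarrow> P i c d"
    and Sw': "\<forall>i\<in>U. i \<in> side E {u',w'} w' \<longleftrightarrow> P i d c"
    using sc_edge[OF T SC PR A(3,4) cd n3 n4] by blast
  have "x1 \<in> side E {u,w} u \<inter> side E {u',w'} u'" using Su Su' X H by blast
  moreover have "x2 \<in> side E {u,w} u \<inter> side E {u',w'} w'" using Su Sw' X H by blast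
  moreover have "x3 \<in> side E {u,w} w \<inter> side E {u',w'} u'" using Sw Su' X H by blast
  moreover have "x4 \<in> side E {u,w} w \<inter> side E {u',w'} w'" using Sw Sw' X H by blast
  ultimately show False using compat[OF T e e'] by blast
qed

definition dd :: "'p set \<Rightarrow> ('v \<Rightarrow> 'p \<Rightarrow> bool) \<Rightarrow> 'v \<Rightarrow> 'v \<Rightarrow> 'p set" where
  "dd Q F x y = {p\<in>Q. F x p \<noteq> F y p}"

lemma dd_sym: "dd Q F x y = dd Q F y x" unfolding dd_def by auto

lemma dd_sub: "dd Q F x y \<subseteq> Q" unfolding dd_def by auto

lemma dd_mem: "p \<in> Q \<Longrightarrow> p \<in> dd Q F x y \<longleftrightarrow> F x p \<noteq> F y p" unfolding dd_def by auto

lemma end_exists: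
  fixes Q :: "'p set" and F :: "'v \<Rightarrow> 'p \<Rightarrow> bool"
  assumes fin: "finite V" "V \<noteq> {}" "finite Q"
    and H3: "\<forall>x\<in>V. \<forall>y\<in>V. \<forall>z\<in>V. dd Q F x y \<subseteq> dd Q F x z \<or> dd Q F y x \<subseteq> dd Q F y z \<or> dd Q F x z \<subseteq> dd Q F x y"
    and HC: "\<forall>p\<in>Q. \<forall>q\<in>Q. \<forall>x1\<in>V. \<forall>x2\<in>V. \<forall>x3\<in>V. \<forall>x4\<in>V. \<not>(F x1 p = F x2 p \<and> F x3 p = F x4 p \<and> F x1 p \<noteq> F x3 p
          \<and> F x1 q = F x3 q \<and> F x2 q = F x4 q \<and> F x1 q \<noteq> F x2 q)"
  shows "\<exists>v\<in>V. \<forall>i\<in>V. \<forall>j\<in>V. dd Q F v i \<subseteq> dd Q F v j \<or> dd Q F v j \<subseteq> dd Q F v i"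
proof -
  define D where "D = dd Q F"
  define f where "f = (\<lambda>pr. card (D (fst pr) (snd pr)))"
  have fi: "finite (f ` (V \<times> V))" using fin by simp
  have ne: "f ` (V \<times> V) \<noteq> {}" using fin by simp
  obtain pr where pr: "pr \<in> V \<times> V" "f pr = Max (f ` (V \<times> V))" using Max_in[OF fi ne] by (metis imageE)
  define v0 where "v0 = fst pr"
  define w0 where "w0 = snd pr"
  have v0: "v0 \<in> V" and w0: "w0 \<in> V" using pr by (auto simp: v0_def w0_def)
  have big: "card (D x y) \<le> card (D v0 w0)" if "x \<in> V" "y \<in> V" for x y
  proof -
    have "f (x,y) \<le> Max (f ` (V \<times> V))" using fi that by simp
    then show ?thesis using pr by (simp add: f_def v0_def w0_def)
  qed
  have lt: "card X < card Y" if "X \<subseteq> Y" "Y \<subseteq> Q" "p \<in> Y" "p \<notin> X" for X Y p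
  proof -
    have "finite Y" using finite_subset[OF that(2) fin(3)] .
    moreover have "X \<subset> Y" using that by blast
    ultimately show ?thesis by (rule psubset_card_mono)
  qed
  have mem: "p \<in> D x y \<longleftrightarrow> F x p \<noteq> F y p" if "p \<in> Q" for p x y using that by (simp add: D_def dd_mem)
  have sub: "D x y \<subseteq> Q" for x y by (simp add: D_def dd_sub)
  have symD: "D x y = D y x" for x y by (simp add: D_def dd_sym)
  show ?thesis
  proof (rule bexI[OF _ v0], rule ccontr)
    assume "\<not> (\<forall>i\<in>V. \<forall>j\<in>V. dd Q F v0 i \<subseteq> dd Q F v0 j \<or> dd Q F v0 j \<subseteq> dd Q F v0 i)"
    then obtain i j where ij: "i \<in> V" "j \<in> V" and n1: "\<not> D v0 i \<subseteq> D v0 j" and n2: "\<not> D v0 j \<subseteq> D v0 i"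
      by (auto simp: D_def)
    obtain s where s: "s \<in> Q" "F v0 s \<noteq> F i s" "F v0 s = F j s" using n1 sub mem by blast
    obtain t where t: "t \<in> Q" "F v0 t \<noteq> F j t" "F v0 t = F i t" using n2 sub mem by blast
    have Hi: "D v0 w0 \<subseteq> D v0 i \<or> D w0 v0 \<subseteq> D w0 i \<or> D v0 i \<subseteq> D v0 w0"
      using H3 v0 w0 ij by (simp add: D_def)
    have Hj: "D v0 w0 \<subseteq> D v0 j \<or> D w0 v0 \<subseteq> D w0 j \<or> D v0 j \<subseteq> D v0 w0"
      using H3 v0 w0 ij by (simp add: D_def)
    have nc2i: "\<not> D w0 v0 \<subseteq> D w0 i"
    proof
      assume h: "D w0 v0 \<subseteq> D w0 i"
      have e: "F w0 s = F v0 s"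
      proof (rule ccontr)
        assume "F w0 s \<noteq> F v0 s"
        then have "s \<in> D w0 i" using h mem[OF s(1)] by blast
        then show False using mem[OF s(1)] s \<open>F w0 s \<noteq> F v0 s\<close> by (cases "F w0 s"; cases "F v0 s"; cases "F i s") auto
      qed
      have "card (D w0 v0) < card (D w0 i)"
        using lt[OF h sub, of s] mem[OF s(1)] s e by auto
      then show False using big[OF w0 ij(1)] symD by (metis not_le)
    qed
    have nc2j: "\<not> D w0 v0 \<subseteq> D w0 j"
    proof
      assume h: "D w0 v0 \<subseteq> D w0 j"
      have e: "F w0 t = F v0 t"
      proof (rule ccontr)
        assume "F w0 t \<noteq> F v0 t"
        then have "t \<in> D w0 j" using h mem[OF t(1)] by blast
        then show False using mem[OF t(1)] t \<open>F w0 t \<noteq> F v0 t\<close> by (cases "F w0 t"; cases "F v0 t"; cases "F j t") auto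
      qed
      have "card (D w0 v0) < card (D w0 j)"
        using lt[OF h sub, of t] mem[OF t(1)] t e by auto
      then show False using big[OF w0 ij(2)] symD by (metis not_le)
    qed
    have ci: "D v0 w0 \<subseteq> D v0 i \<or> D v0 i \<subseteq> D v0 w0" using Hi nc2i by blast
    have cj: "D v0 w0 \<subseteq> D v0 j \<or> D v0 j \<subseteq> D v0 w0" using Hj nc2j by blast
    show False
    proof (cases "D v0 w0 \<subseteq> D v0 i")
      case bi: True
      have tw: "F w0 t = F v0 t" using bi mem[OF t(1)] t by blast
      show False
      proof (cases "D v0 w0 \<subseteq> D v0 j")
        case True
        have sw: "F w0 s = F v0 s" using True mem[OF s(1)] s by blast
        have "card (D v0 w0) < card (D v0 i)"
          using lt[OF bi sub, of s] mem[OF s(1)] s sw by auto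
        then show False using big[OF v0 ij(1)] by simp
      next
        case False
        then have "D v0 j \<subseteq> D v0 w0" using cj by blast
        then have "F w0 t \<noteq> F v0 t" using mem[OF t(1)] t by blast
        then show False using tw by simp
      qed
    next
      case False
      then have ci': "D v0 i \<subseteq> D v0 w0" using ci by blast
      then have sw: "F w0 s \<noteq> F v0 s" using mem[OF s(1)] s by blast
      show False
      proof (cases "D v0 w0 \<subseteq> D v0 j")
        case True
        then have "F w0 s = F v0 s" using mem[OF s(1)] s by blast
        then show False using sw by simp
      next
        case False
        then have "D v0 j \<subseteq> D v0 w0" using cj by blast
        then have tw: "F w0 t \<noteq> F v0 t" using mem[OF t(1)] t by blast
        have "F i s = F w0 s" using s sw by (cases "F i s"; cases "F w0 s"; cases "F v0 s") auto
        moreover have "F j t = F w0 t" using t tw by (cases "F j t"; cases "F w0 t"; cases "F v0 t") auto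
        moreover have "\<not>(F v0 s = F j s \<and> F i s = F w0 s \<and> F v0 s \<noteq> F i s
            \<and> F v0 t = F i t \<and> F j t = F w0 t \<and> F v0 t \<noteq> F j t)"
          using HC s(1) t(1) v0 w0 ij by blast
        ultimately show False using s t by blast
      qed
    qed
  qed
qed

lemma bij_ext:
  assumes b: "bij_betw g {..<n} S" and x: "x \<notin> S"
  shows "bij_betw (g(n := x)) {..<Suc n} (insert x S)"
proof -
  have 1: "bij_betw (g(n := x)) {..<n} S" using b by (subst bij_betw_cong[of _ _ g]) auto
  have 2: "bij_betw (g(n := x)) {n} {x}" by (simp add: bij_betw_def)
  have "bij_betw (g(n := x)) ({..<n} \<union> {n}) (S \<union> {x})" using bij_betw_combine[OF 1 2] x by blast
  moreover have "{..<n} \<union> {n} = {..<Suc n}" by auto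
  ultimately show ?thesis by simp
qed

lemma enum:
  fixes F :: "'v \<Rightarrow> 'p \<Rightarrow> bool"
  assumes W: "finite W" and Q: "finite Q"
    and ch: "\<forall>i\<in>W. \<forall>j\<in>W. dd Q F v i \<subseteq> dd Q F v j \<or> dd Q F v j \<subseteq> dd Q F v i"
  shows "\<exists>(n::nat) g. bij_betw g {..<n} W \<and> (\<forall>i j. i < j \<longrightarrow> j < n \<longrightarrow> dd Q F v (g i) \<subseteq> dd Q F v (g j))"
  using W ch
proof (induction W rule: finite_ranking_induct[where f = "\<lambda>x. card (dd Q F v x)"])
  case empty
  show ?case
    by (rule exI[where x="0::nat"]) (simp add: bij_betw_def)
next
  case (insert x S)
  show ?case
  proof (cases "x \<in> S")
    case True
    then show ?thesis using insert by (simp add: insert_absorb)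
  next
    case False
    have "\<forall>i\<in>S. \<forall>j\<in>S. dd Q F v i \<subseteq> dd Q F v j \<or> dd Q F v j \<subseteq> dd Q F v i" using insert.prems by blast
    then have "\<exists>(n::nat) g. bij_betw g {..<n} S \<and> (\<forall>i j. i < j \<longrightarrow> j < n \<longrightarrow> dd Q F v (g i) \<subseteq> dd Q F v (g j))"
      by (rule insert.IH)
    then obtain n :: nat and g where b: "bij_betw g {..<n} S" and m: "\<forall>i j. i < j \<longrightarrow> j < n \<longrightarrow> dd Q F v (g i) \<subseteq> dd Q F v (g j)"
      by iprover
    have mx: "dd Q F v y \<subseteq> dd Q F v x" if y: "y \<in> S" for y
    proof -
      have c: "card (dd Q F v y) \<le> card (dd Q F v x)" using insert.hyps(2)[OF y] .
      have fx: "finite (dd Q F v x)" using Q dd_sub finite_subset by metis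
      have "dd Q F v y \<subseteq> dd Q F v x \<or> dd Q F v x \<subseteq> dd Q F v y" using insert.prems y by blast
      then show ?thesis
      proof
        assume h: "dd Q F v x \<subseteq> dd Q F v y"
        have fy: "finite (dd Q F v y)" using Q dd_sub finite_subset by metis
        have "dd Q F v x = dd Q F v y" using card_subset_eq[OF fy h] c h card_mono[OF fy h] by linarith
        then show ?thesis by simp
      qed
    qed
    show ?thesis
    proof (intro exI conjI)
      show "bij_betw (g(n := x)) {..<Suc n} (insert x S)" using bij_ext[OF b False] .
      show "\<forall>i j. i < j \<longrightarrow> j < Suc n \<longrightarrow> dd Q F v ((g(n := x)) i) \<subseteq> dd Q F v ((g(n := x)) j)"
      proof (intro allI impI)
        fix i j assume ij: "i < j" "j < Suc n"
        show "dd Q F v ((g(n := x)) i) \<subseteq> dd Q F v ((g(n := x)) j)"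
        proof (cases "j = n")
          case True
          have "g i \<in> S" using b ij True by (auto simp: bij_betw_def)
          then show ?thesis using True ij mx by simp
        next
          case False
          then show ?thesis using m ij by simp
        qed
      qed
    qed
  qed
qed

lemma dd_mono3:
  assumes "dd Q F v x \<subseteq> dd Q F v y" "dd Q F v y \<subseteq> dd Q F v z"
  shows "dd Q F x y \<subseteq> dd Q F x z"
proof
  fix p assume p: "p \<in> dd Q F x y"
  then have pQ: "p \<in> Q" by (simp add: dd_def)
  show "p \<in> dd Q F x z"
    using assms p pQ unfolding dd_def
    by (cases "F v p"; cases "F x p"; cases "F y p"; cases "F z p") blast+
qed

lemma line_edge_eq:
  assumes inj: "inj_on g {..<n}" and m: "Suc m < n" and j: "Suc j < n"
    and e: "{g m, g (Suc m)} = {g j, g (Suc j)}"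
  shows "m = j"
proof -
  have "(g m = g j \<and> g (Suc m) = g (Suc j)) \<or> (g m = g (Suc j) \<and> g (Suc m) = g j)"
    using e by (metis doubleton_eq_iff)
  then have "(m = j) \<or> (m = Suc j \<and> Suc m = j)"
    using inj m j unfolding inj_on_def by (metis Suc_lessD lessThan_iff)
  then show ?thesis by auto
qed

lemma line_side1:
  assumes inj: "inj_on g {..<n}" and E: "E = {{g j, g (Suc j)} | j. Suc j < n}" and j: "Suc j < n"
  shows "side E {g j, g (Suc j)} (g j) = g ` {..j}"
proof
  let ?e = "{g j, g (Suc j)}"
  show "g ` {..j} \<subseteq> side E ?e (g j)"
  proof
    fix x assume "x \<in> g ` {..j}"
    then obtain k where k: "k \<le> j" "x = g k" by auto
    have "(g j, g k) \<in> (adj (E - {?e}))\<^sup>*"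
      using k(1)
    proof (induction rule: inc_induct)
      case base then show ?case by simp
    next
      case (step m)
      have "{g m, g (Suc m)} \<in> E" using E step j by auto
      moreover have "{g m, g (Suc m)} \<noteq> ?e"
      proof
        assume h: "{g m, g (Suc m)} = ?e"
        have "Suc m < n" using step j by simp
        then have "m = j" using line_edge_eq[OF inj _ j h] by simp
        then show False using step by simp
      qed
      ultimately have "(g (Suc m), g m) \<in> adj (E - {?e})" by (simp add: adj_def insert_commute)
      then show ?case using step(3) by (meson rtrancl.rtrancl_into_rtrancl)
    qed
    then show "x \<in> side E ?e (g j)" using k by (simp add: side_def)
  qed
  show "side E ?e (g j) \<subseteq> g ` {..j}"
  proof
    fix x assume "x \<in> side E ?e (g j)"
    then have "(g j, x) \<in> (adj (E - {?e}))\<^sup>*" by (simp add: side_def)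
    then show "x \<in> g ` {..j}"
    proof (induction rule: rtrancl_induct)
      case base then show ?case by simp
    next
      case (step y z)
      obtain k where k: "k \<le> j" "y = g k" using step(3) by auto
      have "{y,z} \<in> E" "{y,z} \<noteq> ?e" using step(2) by (auto simp: adj_def)
      then obtain m where m: "Suc m < n" "{y,z} = {g m, g (Suc m)}" and mj: "m \<noteq> j" using E by auto
      have kn: "k < n" using k j by simp
      have dm: "g m \<noteq> g (Suc m)" using inj m(1) unfolding inj_on_def by (metis Suc_lessD lessThan_iff n_not_Suc_n)
      have "y = g m \<or> y = g (Suc m)" using m(2) by blast
      then show ?case
      proof
        assume ym: "y = g m"
        then have "k = m" using inj k kn m(1) unfolding inj_on_def by (metis Suc_lessD lessThan_iff)
        have "z = g (Suc m)" using m(2) ym dm by (metis doubleton_eq_iff)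
        then show ?case using \<open>k = m\<close> k mj by auto
      next
        assume ym: "y = g (Suc m)"
        then have "k = Suc m" using inj k kn m(1) unfolding inj_on_def by (metis lessThan_iff)
        have "z = g m" using m(2) ym dm by (metis doubleton_eq_iff)
        then show ?case using \<open>k = Suc m\<close> k by auto
      qed
    qed
  qed
qed

lemma line_conn:
  assumes E: "E = {{g j, g (Suc j)} | j. Suc j < n}" and k: "k < n"
  shows "(g 0, g k) \<in> (adj E)\<^sup>*"
  using k
proof (induction k)
  case 0 then show ?case by simp
next
  case (Suc k)
  have "(g k, g (Suc k)) \<in> adj E" using E Suc by (auto simp: adj_def)
  then show ?case using Suc by (meson Suc_lessD rtrancl.rtrancl_into_rtrancl)
qed

lemma line_tree:
  assumes b: "bij_betw g {..<n} U" and E: "E = {{g j, g (Suc j)} | j. Suc j < n}"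
  shows "is_tree U E"
proof -
  have inj: "inj_on g {..<n}" and im: "g ` {..<n} = U" using b by (auto simp: bij_betw_def)
  have dm: "g m \<noteq> g (Suc m)" if "Suc m < n" for m
    using inj that unfolding inj_on_def by (metis Suc_lessD lessThan_iff n_not_Suc_n)
  have "graph_on U E"
    unfolding graph_on_def
  proof
    fix e assume "e \<in> E"
    then obtain m where m: "Suc m < n" "e = {g m, g (Suc m)}" using E by auto
    then show "e \<subseteq> U \<and> card e = 2" using im dm[OF m(1)] by auto
  qed
  moreover have "connected_graph U E"
    unfolding connected_graph_def
  proof (intro ballI)
    fix u w assume "u \<in> U" "w \<in> U"
    then obtain i k where "i < n" "k < n" "u = g i" "w = g k" using im by auto
    then show "(u,w) \<in> (adj E)\<^sup>*" using line_conn[OF E] rtr_sym by (meson rtrancl_trans)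
  qed
  moreover have "\<forall>u w. {u,w} \<in> E \<longrightarrow> (u,w) \<notin> (adj (E - {{u,w}}))\<^sup>*"
  proof (intro allI impI)
    fix u w assume "{u,w} \<in> E"
    then obtain m where m: "Suc m < n" "{u,w} = {g m, g (Suc m)}" using E by auto
    have nr: "(g m, g (Suc m)) \<notin> (adj (E - {{g m, g (Suc m)}}))\<^sup>*"
    proof
      assume "(g m, g (Suc m)) \<in> (adj (E - {{g m, g (Suc m)}}))\<^sup>*"
      then have "g (Suc m) \<in> side E {g m, g (Suc m)} (g m)" by (simp add: side_def)
      then have "g (Suc m) \<in> g ` {..m}" using line_side1[OF inj E m(1)] by simp
      then obtain k where k: "k \<le> m" "g (Suc m) = g k" by auto
      have "Suc m = k" using inj_onD[OF inj k(2)] m(1) k(1) by simp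
      then show False using k(1) by simp
    qed
    have "(u = g m \<and> w = g (Suc m)) \<or> (u = g (Suc m) \<and> w = g m)" using m(2) by (metis doubleton_eq_iff)
    then show "(u,w) \<notin> (adj (E - {{u,w}}))\<^sup>*"
      using nr m(2) rtr_sym by metis
  qed
  ultimately show ?thesis unfolding is_tree_def by blast
qed

lemma line_side2:
  assumes b: "bij_betw g {..<n} U" and E: "E = {{g j, g (Suc j)} | j. Suc j < n}" and j: "Suc j < n"
  shows "side E {g j, g (Suc j)} (g (Suc j)) = g ` {Suc j..<n}"
proof -
  have inj: "inj_on g {..<n}" and im: "g ` {..<n} = U" using b by (auto simp: bij_betw_def)
  have T: "is_tree U E" using line_tree[OF b E] .
  have g: "graph_on U E" and c: "connected_graph U E" using T unfolding is_tree_def by auto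
  have e: "{g j, g (Suc j)} \<in> E" using E j by auto
  have gjU: "g j \<in> U" "g (Suc j) \<in> U" using im j by auto
  have s1: "side E {g j, g (Suc j)} (g j) = g ` {..j}" using line_side1[OF inj E j] .
  show ?thesis
  proof
    show "g ` {Suc j..<n} \<subseteq> side E {g j, g (Suc j)} (g (Suc j))"
    proof
      fix x assume "x \<in> g ` {Suc j..<n}"
      then obtain k where k: "Suc j \<le> k" "k < n" "x = g k" by auto
      have nx: "x \<notin> g ` {..j}"
      proof
        assume "x \<in> g ` {..j}"
        then obtain l where "l \<le> j" "x = g l" by auto
        then show False using k inj j unfolding inj_on_def
          by (metis Suc_le_eq lessThan_iff less_trans nat_less_le not_less_eq_eq)
      qed
      have "x \<in> U" using k im by auto
      then show "x \<in> side E {g j, g (Suc j)} (g (Suc j))"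
        using side_partition[OF c e gjU(1)] s1 nx by blast
    qed
    show "side E {g j, g (Suc j)} (g (Suc j)) \<subseteq> g ` {Suc j..<n}"
    proof
      fix x assume x: "x \<in> side E {g j, g (Suc j)} (g (Suc j))"
      then have "x \<in> U" using side_sub[OF g gjU(2)] by blast
      then obtain k where k: "k < n" "x = g k" using im by auto
      have "\<not> k \<le> j"
      proof
        assume "k \<le> j"
        then have "x \<in> side E {g j, g (Suc j)} (g j)" using s1 k by auto
        then show False using side_disj[OF T e] x by blast
      qed
      then show "x \<in> g ` {Suc j..<n}" using k by auto
    qed
  qed
qed

definition QA :: "'a set \<Rightarrow> ('a \<times> 'a) set" where
  "QA A = {p. fst p \<in> A \<and> snd p \<in> A \<and> fst p \<noteq> snd p}"

definition FP :: "('v \<Rightarrow> 'a \<Rightarrow> 'a \<Rightarrow> bool) \<Rightarrow> 'v \<Rightarrow> 'a \<times> 'a \<Rightarrow> bool" where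
  "FP P x p = P x (fst p) (snd p)"

lemma QA_fin: "finite A \<Longrightarrow> finite (QA A)"
proof -
  assume "finite A"
  moreover have "QA A \<subseteq> A \<times> A" by (auto simp: QA_def)
  ultimately show ?thesis by (meson finite_SigmaI finite_subset)
qed

lemma dd_PB:
  assumes PR: "is_profile V A P" and x: "x \<in> V"
    and s: "dd (QA A) (FP P) x y \<subseteq> dd (QA A) (FP P) x z"
  shows "PB A P x y z"
  unfolding PB_def
proof (intro ballI impI)
  fix a b assume a: "a \<in> A" and b: "b \<in> A" and h: "P x a b \<and> P z a b"
  have ab: "a \<noteq> b" using irr[OF PR x a] h by blast
  have q: "(a,b) \<in> QA A" using a b ab by (simp add: QA_def)
  show "P y a b"
  proof (rule ccontr)
    assume "\<not> P y a b"
    then have "(a,b) \<in> dd (QA A) (FP P) x y" using q h by (simp add: dd_def FP_def)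
    then have "(a,b) \<in> dd (QA A) (FP P) x z" using s by blast
    then show False using h by (simp add: dd_def FP_def)
  qed
qed

lemma PB_dd:
  assumes PR: "is_profile V A P" and x: "x \<in> V" and y: "y \<in> V" and z: "z \<in> V"
    and pb: "PB A P x y z"
  shows "dd (QA A) (FP P) x y \<subseteq> dd (QA A) (FP P) x z"
proof
  fix p assume p: "p \<in> dd (QA A) (FP P) x y"
  obtain a b where pab: "p = (a,b)" by (cases p)
  have a: "a \<in> A" and b: "b \<in> A" and ab: "a \<noteq> b" and d: "P x a b \<noteq> P y a b"
    using p pab by (auto simp: dd_def QA_def FP_def)
  have "P x a b \<noteq> P z a b"
  proof
    assume eq: "P x a b = P z a b"
    show False
    proof (cases "P x a b")
      case True
      then show False using eq pb a b d unfolding PB_def by blast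
    next
      case False
      have 1: "P x b a" using tot[OF PR x a b ab False] .
      have 2: "P z b a" using tot[OF PR z a b ab] False eq by blast
      have "P y b a" using pb 1 2 a b unfolding PB_def by blast
      then have "\<not> P y a b" using asym[OF PR y a b] by blast
      then show False using d False by simp
    qed
  qed
  then show "p \<in> dd (QA A) (FP P) x z" using p pab by (auto simp: dd_def QA_def FP_def)
qed

lemma line_mono:
  assumes bj: "bij_betw g {..<n} V" and E: "E = {{g j, g (Suc j)} | j. Suc j < n}"
    and SC: "single_crossing_wrt V A P E" and PR: "is_profile V A P"
  shows "\<forall>i j k. i < j \<longrightarrow> j < k \<longrightarrow> k < n \<longrightarrow> PB A P (g i) (g j) (g k)"
proof (intro allI impI)
  fix i j k assume ij: "i < j" and jk: "j < k" and kn: "k < n"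
  have inj: "inj_on g {..<n}" and im: "g ` {..<n} = V" using bj by (auto simp: bij_betw_def)
  have gi: "g i \<in> V" and gj: "g j \<in> V" and gk: "g k \<in> V" using im ij jk kn by auto
  show "PB A P (g i) (g j) (g k)"
    unfolding PB_def
  proof (intro ballI impI)
    fix a b assume a: "a \<in> A" and b: "b \<in> A" and h: "P (g i) a b \<and> P (g k) a b"
    have ab: "a \<noteq> b" using irr[OF PR gi a] h by blast
    have "(\<exists>u w. {u,w} \<in> E \<and> (\<forall>i\<in>side E {u,w} u. P i a b) \<and> (\<forall>i\<in>side E {u,w} w. P i b a))
        \<or> (\<forall>i\<in>V. P i a b) \<or> (\<forall>i\<in>V. P i b a)"
      using SC a b ab unfolding single_crossing_wrt_def by blast
    then show "P (g j) a b"
    proof (elim disjE)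
      assume "\<forall>i\<in>V. P i a b" then show ?thesis using gj by blast
    next
      assume "\<forall>i\<in>V. P i b a" then show ?thesis using gi h asym[OF PR gi a b] by blast
    next
      assume "\<exists>u w. {u,w} \<in> E \<and> (\<forall>i\<in>side E {u,w} u. P i a b) \<and> (\<forall>i\<in>side E {u,w} w. P i b a)"
      then obtain u w where e: "{u,w} \<in> E" and Su: "\<forall>i\<in>side E {u,w} u. P i a b"
        and Sw: "\<forall>i\<in>side E {u,w} w. P i b a" by blast
      obtain m where m: "Suc m < n" "{u,w} = {g m, g (Suc m)}" using e E by auto
      have s1: "side E {g m, g (Suc m)} (g m) = g ` {..m}" using line_side1[OF inj E m(1)] .
      have s2: "side E {g m, g (Suc m)} (g (Suc m)) = g ` {Suc m..<n}" using line_side2[OF bj E m(1)] .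
      have "(u = g m \<and> w = g (Suc m)) \<or> (u = g (Suc m) \<and> w = g m)" using m(2) by (metis doubleton_eq_iff)
      then show ?thesis
      proof
        assume uw: "u = g m \<and> w = g (Suc m)"
        then have Su': "\<forall>x\<in>g ` {..m}. P x a b" and Sw': "\<forall>x\<in>g ` {Suc m..<n}. P x b a"
          using Su Sw s1 s2 by auto
        show ?thesis
        proof (cases "j \<le> m")
          case True then show ?thesis using Su' by auto
        next
          case False
          then have "g k \<in> g ` {Suc m..<n}" using jk kn by auto
          then have "P (g k) b a" using Sw' by blast
          then show ?thesis using h asym[OF PR gk a b] by blast
        qed
      next
        assume uw: "u = g (Suc m) \<and> w = g m"
        then have eqe: "{u,w} = {g m, g (Suc m)}" by (simp add: insert_commute)
        have Su': "\<forall>x\<in>g ` {Suc m..<n}. P x a b" using Su s2 uw eqe by simp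
        have Sw': "\<forall>x\<in>g ` {..m}. P x b a" using Sw s1 uw eqe by simp
        show ?thesis
        proof (cases "j \<le> m")
          case False then show ?thesis using Su' jk kn by auto
        next
          case True
          then have "g i \<in> g ` {..m}" using ij by auto
          then have "P (g i) b a" using Sw' by blast
          then show ?thesis using h asym[OF PR gi a b] by blast
        qed
      qed
    qed
  qed
qed

lemma cross:
  assumes bj: "bij_betw g {..<n} V" and E: "E = {{g j, g (Suc j)} | j. Suc j < n}"
    and PR: "is_profile V A P"
    and mono: "\<forall>i j k. i < j \<longrightarrow> j < k \<longrightarrow> k < n \<longrightarrow> PB A P (g i) (g j) (g k)"
    and a: "a \<in> A" and b: "b \<in> A" and ab: "a \<noteq> b"
    and k12: "k1 < k2" "k2 < n" and h1: "P (g k1) a b" and h2: "\<not> P (g k2) a b"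
  shows "\<exists>u w. {u,w} \<in> E \<and> (\<forall>i\<in>side E {u,w} u. P i a b) \<and> (\<forall>i\<in>side E {u,w} w. P i b a)"
proof -
  have inj: "inj_on g {..<n}" and im: "g ` {..<n} = V" using bj by (auto simp: bij_betw_def)
  have gV: "g k \<in> V" if "k < n" for k using im that by auto
  define c where "c = (LEAST k. k < n \<and> \<not> P (g k) a b)"
  have c1: "c < n \<and> \<not> P (g c) a b" unfolding c_def by (rule LeastI[of _ k2]) (use k12 h2 in simp)
  have c2: "c \<le> k2" unfolding c_def by (rule Least_le) (use k12 h2 in simp)
  have c3: "P (g k) a b" if "k < c" for k
  proof -
    have "\<not> (k < n \<and> \<not> P (g k) a b)" using not_less_Least[of k "\<lambda>k. k < n \<and> \<not> P (g k) a b"] that c_def by simp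
    then show ?thesis using that c1 by simp
  qed
  have k1c: "k1 < c"
  proof (rule ccontr)
    assume "\<not> k1 < c"
    then have "c \<le> k1" by simp
    moreover have "c \<noteq> k1" using c1 h1 by auto
    ultimately have ck: "c < k1" by simp
    have "PB A P (g c) (g k1) (g k2)" using mono ck k12 by blast
    moreover have "P (g c) b a" using tot[OF PR gV[of c] a b ab] c1 by blast
    moreover have "P (g k2) b a" using tot[OF PR gV[of k2] a b ab] k12 h2 by blast
    ultimately have "P (g k1) b a" using a b unfolding PB_def by blast
    then show False using asym[OF PR gV[of k1] a b] h1 k12 by simp
  qed
  have c4: "\<not> P (g k) a b" if "c \<le> k" "k < n" for k
  proof (cases "k = c")
    case True then show ?thesis using c1 by simp
  next
    case False
    show ?thesis
    proof
      assume hk: "P (g k) a b"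
      have "PB A P (g k1) (g c) (g k)" using mono k1c that False by auto
      then have "P (g c) a b" using h1 hk a b unfolding PB_def by blast
      then show False using c1 by simp
    qed
  qed
  obtain m where cm: "c = Suc m" using k1c by (cases c) auto
  have mn: "Suc m < n" using c1 cm by simp
  have e: "{g m, g (Suc m)} \<in> E" using E mn by auto
  have s1: "side E {g m, g (Suc m)} (g m) = g ` {..m}" using line_side1[OF inj E mn] .
  have s2: "side E {g m, g (Suc m)} (g (Suc m)) = g ` {Suc m..<n}" using line_side2[OF bj E mn] .
  have "\<forall>i\<in>side E {g m, g (Suc m)} (g m). P i a b" using s1 c3 cm by auto
  moreover have "\<forall>i\<in>side E {g m, g (Suc m)} (g (Suc m)). P i b a"
  proof
    fix i assume "i \<in> side E {g m, g (Suc m)} (g (Suc m))"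
    then obtain k where k: "Suc m \<le> k" "k < n" "i = g k" using s2 by auto
    then show "P i b a" using c4[of k] cm tot[OF PR gV[of k] a b ab] by simp
  qed
  ultimately show ?thesis using e by blast
qed

lemma line_sc:
  assumes bj: "bij_betw g {..<n} V" and E: "E = {{g j, g (Suc j)} | j. Suc j < n}"
    and PR: "is_profile V A P"
    and mono: "\<forall>i j k. i < j \<longrightarrow> j < k \<longrightarrow> k < n \<longrightarrow> PB A P (g i) (g j) (g k)"
  shows "single_crossing_wrt V A P E"
  unfolding single_crossing_wrt_def
proof (intro ballI impI)
  fix a b assume a: "a \<in> A" and b: "b \<in> A" and ab: "a \<noteq> b"
  have im: "g ` {..<n} = V" using bj by (auto simp: bij_betw_def)
  show "(\<exists>u w. {u,w} \<in> E \<and> (\<forall>i\<in>side E {u,w} u. P i a b) \<and> (\<forall>i\<in>side E {u,w} w. P i b a))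
        \<or> (\<forall>i\<in>V. P i a b) \<or> (\<forall>i\<in>V. P i b a)"
  proof (cases "(\<forall>i\<in>V. P i a b) \<or> (\<forall>i\<in>V. P i b a)")
    case True then show ?thesis by blast
  next
    case False
    then obtain i1 i2 where i1: "i1 \<in> V" "\<not> P i1 a b" and i2: "i2 \<in> V" "\<not> P i2 b a" by blast
    obtain k1 where k1: "k1 < n" "i1 = g k1" using i1 im by auto
    obtain k2 where k2: "k2 < n" "i2 = g k2" using i2 im by auto
    have p2: "P (g k2) a b" using tot[OF PR i2(1) b a] ab i2 k2 by auto
    have p1: "P (g k1) b a" using tot[OF PR i1(1) a b ab] i1 k1 by auto
    have "k1 \<noteq> k2" using p2 i1 k1 by auto
    then have "k2 < k1 \<or> k1 < k2" by auto
    then show ?thesis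
    proof
      assume "k2 < k1"
      then show ?thesis using cross[OF bj E PR mono a b ab _ k1(1) p2] i1 k1 by blast
    next
      assume lt: "k1 < k2"
      have "\<not> P (g k2) b a" using asym[OF PR _ a b] p2 k2 i2 by blast
      then obtain u w where "{u,w} \<in> E" "\<forall>i\<in>side E {u,w} u. P i b a" "\<forall>i\<in>side E {u,w} w. P i a b"
        using cross[OF bj E PR mono b a ab[symmetric] lt k2(1) p1] by blast
      then have "{w,u} \<in> E \<and> (\<forall>i\<in>side E {w,u} w. P i a b) \<and> (\<forall>i\<in>side E {w,u} u. P i b a)"
        by (simp add: insert_commute)
      then show ?thesis by blast
    qed
  qed
qed

lemma chain_line:
  assumes U: "finite U" and A: "finite A" and PR: "is_profile U A P"
    and ch: "\<forall>x\<in>U. \<forall>y\<in>U. dd (QA A) (FP P) v x \<subseteq> dd (QA A) (FP P) v y \<or> dd (QA A) (FP P) v y \<subseteq> dd (QA A) (FP P) v x"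
  shows "\<exists>E. is_line U E \<and> is_tree U E \<and> single_crossing_wrt U A P E"
proof -
  obtain n :: nat and h where bj: "bij_betw h {..<n} U"
    and m: "\<forall>i j. i < j \<longrightarrow> j < n \<longrightarrow> dd (QA A) (FP P) v (h i) \<subseteq> dd (QA A) (FP P) v (h j)"
    using enum[OF U QA_fin[OF A] ch] by blast
  have im: "h ` {..<n} = U" using bj by (auto simp: bij_betw_def)
  define E where "E = {{h j, h (Suc j)} | j. Suc j < n}"
  have mono: "\<forall>i j k. i < j \<longrightarrow> j < k \<longrightarrow> k < n \<longrightarrow> PB A P (h i) (h j) (h k)"
  proof (intro allI impI)
    fix i j k assume "i < j" "j < k" "k < n"
    then have "dd (QA A) (FP P) v (h i) \<subseteq> dd (QA A) (FP P) v (h j)"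
      "dd (QA A) (FP P) v (h j) \<subseteq> dd (QA A) (FP P) v (h k)" using m by auto
    then have "dd (QA A) (FP P) (h i) (h j) \<subseteq> dd (QA A) (FP P) (h i) (h k)"
      by (rule dd_mono3)
    moreover have "h i \<in> U" using im \<open>i < j\<close> \<open>j < k\<close> \<open>k < n\<close> by auto
    ultimately show "PB A P (h i) (h j) (h k)" using dd_PB[OF PR] by blast
  qed
  have "is_line U E" unfolding is_line_def E_def using bj by blast
  moreover have "is_tree U E" using line_tree[OF bj E_def] .
  moreover have "single_crossing_wrt U A P E" using line_sc[OF bj E_def PR mono] .
  ultimately show ?thesis by blast
qed

lemma hc_sym:
  assumes T: "is_tree V E" and SC: "single_crossing_wrt V A P E" and PR: "is_profile V A P"
    and aA: "a \<in> A" and bA: "b \<in> A" and cA: "c \<in> A" and dA: "d \<in> A" and ab: "a \<noteq> b" and cd: "c \<noteq> d"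
    and X: "x1 \<in> V" "x2 \<in> V" "x3 \<in> V" "x4 \<in> V"
    and H: "P x1 a b = P x2 a b" "P x3 a b = P x4 a b" "P x1 a b \<noteq> P x3 a b"
      "P x1 c d = P x3 c d" "P x2 c d = P x4 c d" "P x1 c d \<noteq> P x2 c d"
  shows False
proof -
  have nab: "P i b a \<longleftrightarrow> \<not> P i a b" if "i \<in> V" for i
    using tot[OF PR that aA bA ab] asym[OF PR that aA bA] by blast
  have ncd: "P i d c \<longleftrightarrow> \<not> P i c d" if "i \<in> V" for i
    using tot[OF PR that cA dA cd] asym[OF PR that cA dA] by blast
  have n1: "P x1 b a \<longleftrightarrow> \<not> P x1 a b" "P x2 b a \<longleftrightarrow> \<not> P x2 a b" "P x3 b a \<longleftrightarrow> \<not> P x3 a b" "P x4 b a \<longleftrightarrow> \<not> P x4 a b"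
    using nab X by auto
  have n2: "P x1 d c \<longleftrightarrow> \<not> P x1 c d" "P x2 d c \<longleftrightarrow> \<not> P x2 c d" "P x3 d c \<longleftrightarrow> \<not> P x3 c d" "P x4 d c \<longleftrightarrow> \<not> P x4 c d"
    using ncd X by auto
  show False
  proof (cases "P x1 a b")
    case True
    show False
    proof (cases "P x1 c d")
      case True
      show False by (rule tree_hc[OF T SC PR aA bA cA dA X]) (use H n1 n2 \<open>P x1 a b\<close> True in auto)
    next
      case False
      show False by (rule tree_hc[OF T SC PR aA bA dA cA X]) (use H n1 n2 \<open>P x1 a b\<close> False in auto)
    qed
  next
    case F1: False
    show False
    proof (cases "P x1 c d")
      case True
      show False by (rule tree_hc[OF T SC PR bA aA cA dA X]) (use H n1 n2 F1 True in auto)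
    next
      case False
      show False by (rule tree_hc[OF T SC PR bA aA dA cA X]) (use H n1 n2 F1 False in auto)
    qed
  qed
qed

theorem theorem5:
  fixes V :: "'v set" and A :: "'a set" and P :: "'v \<Rightarrow> 'a \<Rightarrow> 'a \<Rightarrow> bool"
  assumes "finite V" and "V \<noteq> {}" and "finite A"
    and "is_profile V A P"
    and "single_crossing_tree V A P"
  shows "(\<forall>U. U \<subseteq> V \<and> U \<noteq> {} \<longrightarrow> single_crossing_tree U A P)
         \<longleftrightarrow> single_crossing_line V A P"
proof
  have PR: "is_profile V A P" using assms(4) .
  assume all: "\<forall>U. U \<subseteq> V \<and> U \<noteq> {} \<longrightarrow> single_crossing_tree U A P"
  have ddself: "dd (QA A) (FP P) x x = {}" for x by (simp add: dd_def)
  have H3: "\<forall>x\<in>V. \<forall>y\<in>V. \<forall>z\<in>V. dd (QA A) (FP P) x y \<subseteq> dd (QA A) (FP P) x z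
      \<or> dd (QA A) (FP P) y x \<subseteq> dd (QA A) (FP P) y z \<or> dd (QA A) (FP P) x z \<subseteq> dd (QA A) (FP P) x y"
  proof (intro ballI)
    fix x y z assume x: "x \<in> V" and y: "y \<in> V" and z: "z \<in> V"
    show "dd (QA A) (FP P) x y \<subseteq> dd (QA A) (FP P) x z
      \<or> dd (QA A) (FP P) y x \<subseteq> dd (QA A) (FP P) y z \<or> dd (QA A) (FP P) x z \<subseteq> dd (QA A) (FP P) x y"
    proof (cases "x = y \<or> y = z \<or> x = z")
      case True
      then show ?thesis using ddself by auto
    next
      case False
      define U where "U = {x,y,z}"
      have "U \<subseteq> V" "U \<noteq> {}" using x y z U_def by auto
      then have "single_crossing_tree U A P" using all by blast
      then obtain E where T: "is_tree U E" and SC: "single_crossing_wrt U A P E"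
        unfolding single_crossing_tree_def by blast
      have PRU: "is_profile U A P" using prof_sub[OF PR \<open>U \<subseteq> V\<close>] .
      have "PB A P x y z \<or> PB A P y x z \<or> PB A P x z y"
        using tree3[OF T SC PRU U_def] False by blast
      then show ?thesis using PB_dd[OF PR] x y z by blast
    qed
  qed
  obtain E where T: "is_tree V E" and SC: "single_crossing_wrt V A P E"
    using assms(5) unfolding single_crossing_tree_def by blast
  have HC: "\<forall>p\<in>QA A. \<forall>q\<in>QA A. \<forall>x1\<in>V. \<forall>x2\<in>V. \<forall>x3\<in>V. \<forall>x4\<in>V.
      \<not>(FP P x1 p = FP P x2 p \<and> FP P x3 p = FP P x4 p \<and> FP P x1 p \<noteq> FP P x3 p
          \<and> FP P x1 q = FP P x3 q \<and> FP P x2 q = FP P x4 q \<and> FP P x1 q \<noteq> FP P x2 q)"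
  proof (intro ballI notI)
    fix p q x1 x2 x3 x4 assume p: "p \<in> QA A" and q: "q \<in> QA A"
      and X: "x1 \<in> V" "x2 \<in> V" "x3 \<in> V" "x4 \<in> V"
      and h: "FP P x1 p = FP P x2 p \<and> FP P x3 p = FP P x4 p \<and> FP P x1 p \<noteq> FP P x3 p
          \<and> FP P x1 q = FP P x3 q \<and> FP P x2 q = FP P x4 q \<and> FP P x1 q \<noteq> FP P x2 q"
    have pA: "fst p \<in> A" "snd p \<in> A" "fst p \<noteq> snd p" using p by (auto simp: QA_def)
    have qA: "fst q \<in> A" "snd q \<in> A" "fst q \<noteq> snd q" using q by (auto simp: QA_def)
    have hh: "P x1 (fst p) (snd p) = P x2 (fst p) (snd p) \<and> P x3 (fst p) (snd p) = P x4 (fst p) (snd p)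
        \<and> P x1 (fst p) (snd p) \<noteq> P x3 (fst p) (snd p)
        \<and> P x1 (fst q) (snd q) = P x3 (fst q) (snd q) \<and> P x2 (fst q) (snd q) = P x4 (fst q) (snd q)
        \<and> P x1 (fst q) (snd q) \<noteq> P x2 (fst q) (snd q)"
      using h unfolding FP_def .
    then show False
      by (elim conjE) (rule hc_sym[OF T SC PR pA(1,2) qA(1,2) pA(3) qA(3) X]; assumption)
  qed
  obtain v where v: "v \<in> V" and ch: "\<forall>i\<in>V. \<forall>j\<in>V. dd (QA A) (FP P) v i \<subseteq> dd (QA A) (FP P) v j
      \<or> dd (QA A) (FP P) v j \<subseteq> dd (QA A) (FP P) v i"
    using end_exists[OF assms(1,2) QA_fin[OF assms(3)] H3 HC] by blast
  obtain E' where "is_line V E'" "single_crossing_wrt V A P E'"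
    using chain_line[OF assms(1,3) PR ch] by blast
  then show "single_crossing_line V A P" unfolding single_crossing_line_def by blast
next
  have PR: "is_profile V A P" using assms(4) .
  assume "single_crossing_line V A P"
  then obtain E f and n :: nat where bj: "bij_betw f {..<n} V" and E: "E = {{f j, f (Suc j)} | j. Suc j < n}"
    and SC: "single_crossing_wrt V A P E"
    unfolding single_crossing_line_def is_line_def by blast
  have mono: "\<forall>i j k. i < j \<longrightarrow> j < k \<longrightarrow> k < n \<longrightarrow> PB A P (f i) (f j) (f k)"
    using line_mono[OF bj E SC PR] .
  have im: "f ` {..<n} = V" using bj by (auto simp: bij_betw_def)
  have C: "dd (QA A) (FP P) (f 0) (f i) \<subseteq> dd (QA A) (FP P) (f 0) (f j)" if ij: "i \<le> j" "j < n" for i j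
  proof (cases "i = 0 \<or> i = j")
    case True
    then show ?thesis by (auto simp: dd_def)
  next
    case False
    then have "0 < i" "i < j" using ij by auto
    then have "PB A P (f 0) (f i) (f j)" using mono ij by blast
    moreover have "f 0 \<in> V" "f i \<in> V" "f j \<in> V" using im ij by auto
    ultimately show ?thesis using PB_dd[OF PR] by blast
  qed
  show "\<forall>U. U \<subseteq> V \<and> U \<noteq> {} \<longrightarrow> single_crossing_tree U A P"
  proof (intro allI impI)
    fix U assume U: "U \<subseteq> V \<and> U \<noteq> {}"
    have ch: "\<forall>x\<in>U. \<forall>y\<in>U. dd (QA A) (FP P) (f 0) x \<subseteq> dd (QA A) (FP P) (f 0) y
        \<or> dd (QA A) (FP P) (f 0) y \<subseteq> dd (QA A) (FP P) (f 0) x"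
    proof (intro ballI)
      fix x y assume "x \<in> U" "y \<in> U"
      then obtain i j where "i < n" "j < n" "x = f i" "y = f j" using U im by blast
      then show "dd (QA A) (FP P) (f 0) x \<subseteq> dd (QA A) (FP P) (f 0) y
        \<or> dd (QA A) (FP P) (f 0) y \<subseteq> dd (QA A) (FP P) (f 0) x"
        using C[of i j] C[of j i] by (cases "i \<le> j") auto
    qed
    have fU: "finite U" using U assms(1) finite_subset by blast
    obtain E' where "is_tree U E'" "single_crossing_wrt U A P E'"
      using chain_line[OF fU assms(3) prof_sub[OF PR] ch] U by blast
    then show "single_crossing_tree U A P" unfolding single_crossing_tree_def by blast
  qed
qed

end
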